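(* Let $G$ be a connected block graph on $n$ vertices with blocks $B_1,\dots,B_t$ of orders $b_1,\dots,b_t$, and equip $V(G)$ with a Hamming labelling as described in the context. Let $S\subseteq V(G)$ with $|S|=k$, $2\le k\le n$. Then $$d(S)=\sum_{i=1}^t \ell_i(S) - t,$$ where $\ell_i(S)$ is the number of distinct values taken by the $i$-th coordinates of the labels of the vertices in $S$.
   Context: A block of a graph is a maximal connected induced subgraph without cut vertices; a block graph is a graph in which every block is a clique. For connected $G$ and $S\subseteq V(G)$, the Steiner distance $d(S)$ is the minimum number of edges of a connected subgraph of $G$ whose vertex set contains $S$. $G\setminus B_i$ denotes the graph obtained from $G$ by deleting all edges of block $B_i$; each connected component of $G\setminus B_i$ contains exactly one vertex of $B_i$. Hamming labelling: for each $i\in\{1,\dots,t\}$ choose an injective map $f_i:V(B_i)\to\{0,1,\dots,b_i-1\}$; for a vertex $u\in V(G)$, its $i$-th coordinate is $f_i(w)$, where $w$ is the unique vertex of $B_i$ lying in the connected component of $G\setminus B_i$ that contains $u$. The label of $u$ is the $t$-tuple of its coordinates (this gives an isometric embedding of $G$ into $K_{b_1}\square\cdots\square K_{b_t}$). *)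

theory Defs
  imports Main
begin

definition simple_graph :: "'a set \<Rightarrow> 'a set set \<Rightarrow> bool" where
  "simple_graph V E \<longleftrightarrow> finite V \<and> (\<forall>e\<in>E. e \<subseteq> V \<and> card e = 2)"

definition reach :: "'a set set \<Rightarrow> 'a \<Rightarrow> 'a \<Rightarrow> bool" where
  "reach F x y \<longleftrightarrow> (\<lambda>a b. {a, b} \<in> F)\<^sup>*\<^sup>* x y"

definition conn :: "'a set \<Rightarrow> 'a set set \<Rightarrow> bool" where
  "conn W F \<longleftrightarrow> (\<forall>x\<in>W. \<forall>y\<in>W. reach F x y)"

definition induced :: "'a set set \<Rightarrow> 'a set \<Rightarrow> 'a set set" where
  "induced E B = {e \<in> E. e \<subseteq> B}"

definition no_cut :: "'a set set \<Rightarrow> 'a set \<Rightarrow> bool" where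
  "no_cut E B \<longleftrightarrow> conn B (induced E B) \<and>
     (\<forall>v\<in>B. conn (B - {v}) (induced E (B - {v})))"

definition is_block :: "'a set \<Rightarrow> 'a set set \<Rightarrow> 'a set \<Rightarrow> bool" where
  "is_block V E B \<longleftrightarrow> B \<subseteq> V \<and> B \<noteq> {} \<and> no_cut E B \<and>
     (\<forall>B'. B \<subseteq> B' \<and> B' \<subseteq> V \<and> no_cut E B' \<longrightarrow> B' = B)"

definition blocks :: "'a set \<Rightarrow> 'a set set \<Rightarrow> 'a set set" where
  "blocks V E = {B. is_block V E B}"

definition is_clique :: "'a set set \<Rightarrow> 'a set \<Rightarrow> bool" where
  "is_clique E B \<longleftrightarrow> (\<forall>x\<in>B. \<forall>y\<in>B. x \<noteq> y \<longrightarrow> {x, y} \<in> E)"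

definition block_graph :: "'a set \<Rightarrow> 'a set set \<Rightarrow> bool" where
  "block_graph V E \<longleftrightarrow> (\<forall>B\<in>blocks V E. is_clique E B)"

definition steiner_dist :: "'a set \<Rightarrow> 'a set set \<Rightarrow> 'a set \<Rightarrow> nat" where
  "steiner_dist V E S = (LEAST m. \<exists>W F. S \<subseteq> W \<and> W \<subseteq> V \<and> F \<subseteq> E \<and>
       (\<forall>e\<in>F. e \<subseteq> W) \<and> conn W F \<and> card F = m)"

definition hamming_maps :: "'a set \<Rightarrow> 'a set set \<Rightarrow> ('a set \<Rightarrow> 'a \<Rightarrow> nat) \<Rightarrow> bool" where
  "hamming_maps V E f \<longleftrightarrow>
     (\<forall>B\<in>blocks V E. inj_on (f B) B \<and> f B ` B \<subseteq> {0..<card B})"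

text \<open>The coordinate of u for block B: f B w, where w is the unique vertex of B in
  the component of G \ B (edges of B deleted) containing u.\<close>
definition coord :: "'a set set \<Rightarrow> ('a set \<Rightarrow> 'a \<Rightarrow> nat) \<Rightarrow> 'a set \<Rightarrow> 'a \<Rightarrow> nat" where
  "coord E f B u = f B (THE w. w \<in> B \<and> reach (E - induced E B) u w)"

definition ell :: "'a set set \<Rightarrow> ('a set \<Rightarrow> 'a \<Rightarrow> nat) \<Rightarrow> 'a set \<Rightarrow> 'a set \<Rightarrow> nat" where
  "ell E f B S = card (coord E f B ` S)"

end

theory Submission
  imports Defs
begin


abbreviation adj :: "'a set set \<Rightarrow> 'a \<Rightarrow> 'a \<Rightarrow> bool" where
  "adj F \<equiv> (\<lambda>a b. {a, b} \<in> F)"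

definition gdist :: "'a set set \<Rightarrow> 'a \<Rightarrow> 'a \<Rightarrow> nat" where
  "gdist F x y = (LEAST n. (adj F ^^ n) x y)"

lemma reach_refl[simp]: "reach F x x"
  by (simp add: reach_def)

lemma reach_edge: "{x, y} \<in> F \<Longrightarrow> reach F x y"
  unfolding reach_def by (auto intro: r_into_rtranclp)

lemma reach_step: "reach F x y \<Longrightarrow> {y, z} \<in> F \<Longrightarrow> reach F x z"
  unfolding reach_def by (rule rtranclp.rtrancl_into_rtrancl)

lemma reach_trans: "reach F x y \<Longrightarrow> reach F y z \<Longrightarrow> reach F x z"
  unfolding reach_def by (rule rtranclp_trans)

lemma reach_sym: "reach F x y \<Longrightarrow> reach F y x"
  unfolding reach_def
proof (induction rule: rtranclp_induct)
  case base then show ?case by simp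
next
  case (step y z)
  then have "{z, y} \<in> F" by (simp add: insert_commute)
  then show ?case using step(3) by (rule converse_rtranclp_into_rtranclp)
qed

lemma reach_mono: "F \<subseteq> G \<Longrightarrow> reach F x y \<Longrightarrow> reach G x y"
  unfolding reach_def by (erule rtranclp_mono[THEN predicate2D, rotated]) auto

lemma reach_pow: "reach F x y \<longleftrightarrow> (\<exists>n. (adj F ^^ n) x y)"
  unfolding reach_def by (rule rtranclp_power)

lemma pow_reach: "(adj F ^^ n) x y \<Longrightarrow> reach F x y"
  unfolding reach_def by (rule relpowp_imp_rtranclp)

lemma pow_sym: "(adj F ^^ n) x y \<Longrightarrow> (adj F ^^ n) y x"
proof (induction n arbitrary: x y)
  case 0 then show ?case by simp
next
  case (Suc n)
  from Suc.prems obtain z where "(adj F ^^ n) x z" "adj F z y" by (rule relpowp_Suc_E)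
  then have "(adj F ^^ n) z x" "adj F y z" using Suc.IH by (auto simp: insert_commute)
  then show ?case by (rule relpowp_Suc_I2[rotated])
qed

lemma pow_sym_iff: "(adj F ^^ n) x y \<longleftrightarrow> (adj F ^^ n) y x"
  using pow_sym by metis

lemma gdist_sym: "gdist F x y = gdist F y x"
  unfolding gdist_def by (subst pow_sym_iff) (rule refl)

lemma gdist_pow: "reach F x y \<Longrightarrow> (adj F ^^ gdist F x y) x y"
  unfolding gdist_def reach_pow by (rule LeastI_ex)

lemma gdist_le: "(adj F ^^ n) x y \<Longrightarrow> gdist F x y \<le> n"
  unfolding gdist_def by (rule Least_le)

lemma gdist_refl[simp]: "gdist F x x = 0"
  using gdist_le[where F=F and n=0 and x=x and y=x] by simp

lemma gdist_0: "reach F x y \<Longrightarrow> gdist F x y = 0 \<Longrightarrow> x = y"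
  using gdist_pow[of F x y] by simp

lemma gdist_tri: "reach F x y \<Longrightarrow> reach F y z \<Longrightarrow> gdist F x z \<le> gdist F x y + gdist F y z"
proof -
  assume a: "reach F x y" "reach F y z"
  have "(adj F ^^ (gdist F x y + gdist F y z)) x z"
    unfolding relpowp_add using gdist_pow[OF a(1)] gdist_pow[OF a(2)] by blast
  then show ?thesis by (rule gdist_le)
qed

lemma gdist_edge: "{x, y} \<in> F \<Longrightarrow> gdist F x y \<le> 1"
proof -
  assume "{x, y} \<in> F"
  then have "(adj F ^^ 1) x y" by (auto simp: relcompp_apply)
  then show ?thesis by (rule gdist_le)
qed

lemma gdist_adj: "reach F x y \<Longrightarrow> {y, z} \<in> F \<Longrightarrow> gdist F x z \<le> gdist F x y + 1"
  using gdist_tri[of F x y z] gdist_edge[of y z F] reach_edge[of y z F] by force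

lemma gdist_pred:
  assumes "reach F x y" "gdist F x y = Suc k"
  shows "\<exists>z. {z, y} \<in> F \<and> reach F x z \<and> gdist F x z = k"
proof -
  have "(adj F ^^ Suc k) x y" using gdist_pow[OF assms(1)] assms(2) by simp
  then obtain z where z0: "(adj F ^^ k) x z" "adj F z y" by (rule relpowp_Suc_E)
  have z: "(adj F ^^ k) x z" "{z, y} \<in> F" using z0(1) apply assumption using z0(2) by simp
  have rz: "reach F x z" using z(1) by (rule pow_reach)
  have "gdist F x z \<le> k" using z(1) by (rule gdist_le)
  moreover have "gdist F x y \<le> gdist F x z + 1" using gdist_adj[OF rz z(2)] .
  ultimately show ?thesis using z rz assms(2) by (intro exI[of _ z]) auto
qed

definition geo :: "'a set set \<Rightarrow> 'a \<Rightarrow> 'a \<Rightarrow> 'a \<Rightarrow> bool" where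
  "geo F a b y \<longleftrightarrow> reach F a y \<and> gdist F a y + gdist F y b = gdist F a b"

lemma geo_start: "reach F a b \<Longrightarrow> geo F a b a"
  by (simp add: geo_def)

lemma geo_end: "reach F a b \<Longrightarrow> geo F a b b"
  by (simp add: geo_def)

lemma geo_swap:
  assumes "reach F a b" "geo F a b y" shows "geo F b a y"
  using assms unfolding geo_def
  by (metis add.commute gdist_sym reach_sym reach_trans)

lemma geo_reach2: "reach F a b \<Longrightarrow> geo F a b y \<Longrightarrow> reach F y b"
  unfolding geo_def by (metis reach_sym reach_trans)

lemma geo_pred:
  assumes ab: "reach F a b" and g: "geo F a b y" and d: "gdist F a y = Suc k"
  shows "\<exists>z. {z, y} \<in> F \<and> geo F a b z \<and> gdist F a z = k"
proof -
  have ay: "reach F a y" using g by (simp add: geo_def)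
  obtain z where z: "{z, y} \<in> F" "reach F a z" "gdist F a z = k"
    using gdist_pred[OF ay d] by blast
  have yb: "reach F y b" using geo_reach2[OF ab g] .
  have zy: "reach F z y" using z(1) by (rule reach_edge)
  have zb: "reach F z b" using reach_trans[OF zy yb] .
  have "gdist F z b \<le> gdist F z y + gdist F y b" using gdist_tri[OF zy yb] .
  moreover have "gdist F z y \<le> 1" using gdist_edge[OF z(1)] .
  moreover have "gdist F a b \<le> gdist F a z + gdist F z b" using gdist_tri[OF z(2) zb] .
  ultimately have "gdist F a z + gdist F z b = gdist F a b"
    using g d z(3) unfolding geo_def by linarith
  then show ?thesis using z by (auto simp: geo_def)
qed

lemma geo_le: "geo F a b y \<Longrightarrow> gdist F a y \<le> gdist F a b"
  unfolding geo_def by linarith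

lemma geo_chain:
  assumes ab: "reach F a b" and FE: "F \<subseteq> E"
    and hyp: "\<forall>y'. geo F a b y' \<and> gdist F a y' < m \<longrightarrow> y' \<in> T"
  shows "geo F a b y \<Longrightarrow> gdist F a y \<le> m \<Longrightarrow> y \<in> T \<Longrightarrow> reach (induced E T) a y"
proof (induction "gdist F a y" arbitrary: y)
  case 0
  then have "a = y" using gdist_0[of F a y] by (simp add: geo_def)
  then show ?case by simp
next
  case (Suc k)
  obtain z where z: "{z, y} \<in> F" "geo F a b z" "gdist F a z = k"
    using geo_pred[OF ab Suc(3) Suc(2)[symmetric]] by blast
  have zT: "z \<in> T" using hyp z Suc(2,4) by auto
  have "reach (induced E T) a z" using Suc(1)[of z] z zT Suc(2,4) by simp
  moreover have "{z, y} \<in> induced E T" using z(1) FE zT Suc(5) by (auto simp: induced_def)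
  ultimately show ?case by (rule reach_step)
qed

lemma closest_reach:
  assumes ux: "reach E u x" and xB: "x \<in> B"
    and cl: "\<forall>b\<in>B. reach E u b \<longrightarrow> gdist E u x \<le> gdist E u b"
  shows "reach (E - induced E B) u x"
proof -
  have "\<forall>y. geo E u x y \<and> gdist E u y = k \<longrightarrow> reach (E - induced E B) u y" for k
  proof (induction k)
    case 0
    show ?case
    proof (intro allI impI)
      fix y assume "geo E u x y \<and> gdist E u y = 0"
      then have "u = y" using gdist_0[of E u y] by (auto simp: geo_def)
      then show "reach (E - induced E B) u y" by simp
    qed
  next
    case (Suc k)
    show ?case
    proof (intro allI impI)
      fix y assume y: "geo E u x y \<and> gdist E u y = Suc k"
      obtain z where z: "{z, y} \<in> E" "geo E u x z" "gdist E u z = k"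
        using geo_pred[OF ux, of y k] y by blast
      have IH: "reach (E - induced E B) u z" using Suc z by blast
      have "z \<notin> B"
      proof
        assume "z \<in> B"
        then have "gdist E u x \<le> gdist E u z" using cl z(2) by (auto simp: geo_def)
        moreover have "gdist E u y \<le> gdist E u x" using geo_le[of E u x y] y by simp
        ultimately show False using y z by simp
      qed
      then have "{z, y} \<in> E - induced E B" using z(1) by (auto simp: induced_def)
      then show "reach (E - induced E B) u y" by (rule reach_step[OF IH])
    qed
  qed
  then have "geo E u x x \<and> gdist E u x = gdist E u x \<longrightarrow> reach (E - induced E B) u x" by blast
  then show ?thesis using geo_end[OF ux] by simp
qed

lemma conn_hub:
  assumes "K \<subseteq> T" "conn K G" "G \<subseteq> H" "\<forall>x\<in>T. \<exists>k\<in>K. reach H x k"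
  shows "conn T H"
  unfolding conn_def
proof (intro ballI)
  fix x y assume "x \<in> T" "y \<in> T"
  then obtain k1 k2 where k: "k1 \<in> K" "k2 \<in> K" "reach H x k1" "reach H y k2" using assms(4) by blast
  have "reach G k1 k2" using assms(2) k(1,2) unfolding conn_def by blast
  then have "reach H k1 k2" by (rule reach_mono[OF assms(3)])
  then have "reach H x k2" by (rule reach_trans[OF k(3)])
  then show "reach H x y" by (rule reach_trans[OF _ reach_sym[OF k(4)]])
qed

lemma induced_mono: "A \<subseteq> C \<Longrightarrow> induced E A \<subseteq> induced E C"
  by (auto simp: induced_def)

lemma conn_union:
  assumes "conn A (induced E A)" "conn C (induced E C)" "A \<inter> C \<noteq> {}"
  shows "conn (A \<union> C) (induced E (A \<union> C))"
proof -
  obtain z where z: "z \<in> A" "z \<in> C" using assms(3) by blast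
  have hub: "\<forall>x\<in>A \<union> C. \<exists>k\<in>{z}. reach (induced E (A \<union> C)) x k"
  proof
    fix x assume "x \<in> A \<union> C"
    then show "\<exists>k\<in>{z}. reach (induced E (A \<union> C)) x k"
    proof
      assume "x \<in> A"
      then have "reach (induced E A) x z" using assms(1) z unfolding conn_def by blast
      then show ?thesis using reach_mono[OF induced_mono[of A "A \<union> C"]] by blast
    next
      assume "x \<in> C"
      then have "reach (induced E C) x z" using assms(2) z unfolding conn_def by blast
      then show ?thesis using reach_mono[OF induced_mono[of C "A \<union> C"]] by blast
    qed
  qed
  have s1: "{z} \<subseteq> A \<union> C" using z by blast
  have s2: "conn {z} {}" by (simp add: conn_def)
  have s3: "{} \<subseteq> induced E (A \<union> C)" by simp
  show ?thesis by (rule conn_hub[OF s1 s2 s3 hub])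
qed



lemma edge_ne:
  assumes "{x, y} \<in> E" "simple_graph V E" shows "x \<noteq> y"
proof
  assume "x = y" then have "card {x, y} = 1" by simp
  moreover have "card {x, y} = 2" using assms unfolding simple_graph_def by blast
  ultimately show False by simp
qed

lemma edge_V: "e \<in> E \<Longrightarrow> simple_graph V E \<Longrightarrow> e \<subseteq> V"
  unfolding simple_graph_def by blast

lemma finite_E: "simple_graph V E \<Longrightarrow> finite E"
proof -
  assume sg: "simple_graph V E"
  then have "E \<subseteq> Pow V" using edge_V by blast
  moreover have "finite V" using sg by (simp add: simple_graph_def)
  ultimately show ?thesis by (rule finite_subset[OF _ finite_Pow_iff[THEN iffD2]])
qed

lemma reach_V:
  assumes "reach F x y" "F \<subseteq> E" "x \<in> V" "simple_graph V E"
  shows "y \<in> V"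
  using assms(1) unfolding reach_def
proof (induction rule: rtranclp_induct)
  case base then show ?case using assms(3) .
next
  case (step y z)
  then have "{y, z} \<subseteq> V" using edge_V[OF _ assms(4)] assms(2) by blast
  then show ?case by simp
qed

lemma block_unique:
  assumes sg: "simple_graph V E" and B: "is_block V E B"
    and w: "w1 \<in> B" "w2 \<in> B" and r: "reach (E - induced E B) w1 w2"
  shows "w1 = w2"
proof (rule ccontr)
  assume ne: "w1 \<noteq> w2"
  define F where "F = E - induced E B"
  have FE: "F \<subseteq> E" by (simp add: F_def)
  define P where "P = (\<lambda>n. \<exists>a b. a \<in> B \<and> b \<in> B \<and> a \<noteq> b \<and> (adj F ^^ n) a b)"
  obtain n0 where "(adj F ^^ n0) w1 w2" using r unfolding F_def reach_pow by blast
  then have "P n0" using ne w unfolding P_def by blast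
  define n where "n = (LEAST n. P n)"
  have Pn: "P n" unfolding n_def by (rule LeastI) fact
  have nmin: "\<And>m. P m \<Longrightarrow> n \<le> m" unfolding n_def by (rule Least_le)
  obtain a b where ab: "a \<in> B" "b \<in> B" "a \<noteq> b" "(adj F ^^ n) a b" using Pn unfolding P_def by blast
  have rab: "reach F a b" using ab(4) by (rule pow_reach)
  have dmin: "n \<le> gdist F x y" if "x \<in> B" "y \<in> B" "x \<noteq> y" "reach F x y" for x y
  proof -
    have "P (gdist F x y)" unfolding P_def using that gdist_pow[OF that(4)] by blast
    then show ?thesis by (rule nmin)
  qed
  have dab: "gdist F a b = n"
    using gdist_le[OF ab(4)] dmin[OF ab(1-3) rab] by simp
  have n0: "n \<noteq> 0" using ab(3,4) by (cases n) auto
  have n1: "n \<noteq> 1"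
  proof
    assume "n = 1"
    then have "(adj F ^^ 1) a b" using ab(4) by simp
    then have "{a, b} \<in> F" by (auto simp: relcompp_apply)
    moreover have "{a, b} \<subseteq> B" using ab by simp
    ultimately show False unfolding F_def induced_def by blast
  qed
  define Geo where "Geo = {y. geo F a b y}"
  have GeoB: "y = a \<or> y = b" if "y \<in> Geo" "y \<in> B" for y
  proof (rule ccontr)
    assume c: "\<not> (y = a \<or> y = b)"
    have g: "geo F a b y" using that(1) by (simp add: Geo_def)
    have ay: "reach F a y" using g by (simp add: geo_def)
    have yb: "reach F y b" by (rule geo_reach2[OF rab g])
    have "n \<le> gdist F a y" using dmin[OF ab(1) that(2) _ ay] c by auto
    moreover have "n \<le> gdist F y b" using dmin[OF that(2) ab(2) _ yb] c by auto
    moreover have "gdist F a y + gdist F y b = n" using g dab by (simp add: geo_def)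
    ultimately show False using n0 by linarith
  qed
  obtain k where nk: "n = Suc k" using n0 by (cases n) auto
  obtain x where x: "{x, b} \<in> F" "geo F a b x" "gdist F a x = k"
    using geo_pred[OF rab geo_end[OF rab]] dab nk by blast
  have xB: "x \<notin> B"
  proof
    assume "x \<in> B"
    then have "x = a \<or> x = b" using GeoB x(2) by (simp add: Geo_def)
    then show False
    proof
      assume "x = a" then show False using x(3) nk n1 by simp
    next
      assume "x = b" then show False using x(3) dab nk by simp
    qed
  qed
  define D where "D = B \<union> Geo"
  have BV: "B \<subseteq> V" using B by (simp add: is_block_def)
  have aV: "a \<in> V" using BV ab by blast
  have GeoV: "Geo \<subseteq> V"
  proof
    fix y assume "y \<in> Geo"
    then have "reach F a y" by (simp add: Geo_def geo_def)
    then show "y \<in> V" using reach_V[OF _ FE aV sg] by blast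
  qed
  have DV: "D \<subseteq> V" using BV GeoV by (simp add: D_def)
  have noB: "no_cut E B" using B by (simp add: is_block_def)
  have connDZ: "conn (D - Z) (induced E (D - Z))" if Z: "Z = {} \<or> (\<exists>v. Z = {v})" for Z
  proof -
    have connB: "conn (B - Z) (induced E (B - Z))"
    proof (cases "Z = {}")
      case True then show ?thesis using noB by (simp add: no_cut_def)
    next
      case False
      then obtain v where v: "Z = {v}" using Z by blast
      show ?thesis
      proof (cases "v \<in> B")
        case True then show ?thesis using noB v by (simp add: no_cut_def)
      next
        case False then have "B - Z = B" using v by blast
        then show ?thesis using noB by (simp add: no_cut_def)
      qed
    qed
    have rba: "reach F b a" using rab by (rule reach_sym)
    have GeoD: "Geo \<subseteq> D" by (simp add: D_def)
    have georeach: "(a \<notin> Z \<and> reach (induced E (D - Z)) a y) \<or> (b \<notin> Z \<and> reach (induced E (D - Z)) b y)"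
      if y: "y \<in> Geo" "y \<notin> Z" for y
    proof -
      have gy: "geo F a b y" using y(1) by (simp add: Geo_def)
      have ay: "reach F a y" using gy by (simp add: geo_def)
      show ?thesis
      proof (cases "\<forall>v\<in>Z. v \<in> Geo \<longrightarrow> gdist F a y \<le> gdist F a v")
        case True
        have hyp: "\<forall>y'. geo F a b y' \<and> gdist F a y' < gdist F a y \<longrightarrow> y' \<in> D - Z"
        proof (intro allI impI)
          fix y' assume h: "geo F a b y' \<and> gdist F a y' < gdist F a y"
          then have "y' \<in> Geo" by (simp add: Geo_def)
          moreover have "y' \<notin> Z" using True h \<open>y' \<in> Geo\<close> by auto
          ultimately show "y' \<in> D - Z" using GeoD by blast
        qed
        have "reach (induced E (D - Z)) a y"
          using geo_chain[OF rab FE hyp gy] y GeoD by blast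
        moreover have "a \<notin> Z"
        proof
          assume "a \<in> Z"
          moreover have "a \<in> Geo" using geo_start[OF rab] by (simp add: Geo_def)
          ultimately have "gdist F a y \<le> 0" using True by fastforce
          then have "a = y" using gdist_0[OF ay] by simp
          then show False using \<open>a \<in> Z\<close> y(2) by simp
        qed
        ultimately show ?thesis by blast
      next
        case False
        then obtain v where v: "v \<in> Z" "v \<in> Geo" "gdist F a v < gdist F a y" by force
        have Zv: "Z = {v}" using Z v(1) by blast
        have gv: "geo F a b v" using v(2) by (simp add: Geo_def)
        have gby: "geo F b a y" by (rule geo_swap[OF rab gy])
        have e1': "gdist F a y + gdist F y b = n" using gy dab by (simp add: geo_def)
        have e1: "gdist F b y = n - gdist F a y" using e1' gdist_sym[of F b y] by linarith
        have e2': "gdist F a v + gdist F v b = n" using gv dab by (simp add: geo_def)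
        have e2: "gdist F b v = n - gdist F a v" using e2' gdist_sym[of F b v] by linarith
        have l1: "gdist F a y \<le> n" using geo_le[OF gy] dab by simp
        have bv: "gdist F b y < gdist F b v" using e1 e2 l1 v(3) by linarith
        have hyp: "\<forall>y'. geo F b a y' \<and> gdist F b y' < gdist F b y \<longrightarrow> y' \<in> D - Z"
        proof (intro allI impI)
          fix y' assume h: "geo F b a y' \<and> gdist F b y' < gdist F b y"
          then have "geo F a b y'" using geo_swap[OF rba] by blast
          then have "y' \<in> Geo" by (simp add: Geo_def)
          moreover have "y' \<noteq> v" using h bv by auto
          ultimately show "y' \<in> D - Z" using GeoD Zv by blast
        qed
        have "reach (induced E (D - Z)) b y"
          using geo_chain[OF rba FE hyp gby] y GeoD by blast
        moreover have "b \<notin> Z" using bv Zv by auto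
        ultimately show ?thesis by blast
      qed
    qed
    have hub: "\<forall>x\<in>D - Z. \<exists>k\<in>B - Z. reach (induced E (D - Z)) x k"
    proof
      fix x assume x: "x \<in> D - Z"
      show "\<exists>k\<in>B - Z. reach (induced E (D - Z)) x k"
      proof (cases "x \<in> B")
        case True then show ?thesis using x by (intro bexI[of _ x]) auto
      next
        case False
        then have xG: "x \<in> Geo" "x \<notin> Z" using x by (auto simp: D_def)
        from georeach[OF xG] show ?thesis
        proof
          assume h: "a \<notin> Z \<and> reach (induced E (D - Z)) a x"
          then have "reach (induced E (D - Z)) x a" using reach_sym[of "induced E (D - Z)" a x] by simp
          moreover have "a \<in> B - Z" using h ab(1) by simp
          ultimately show ?thesis by blast
        next
          assume h: "b \<notin> Z \<and> reach (induced E (D - Z)) b x"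
          then have "reach (induced E (D - Z)) x b" using reach_sym[of "induced E (D - Z)" b x] by simp
          moreover have "b \<in> B - Z" using h ab(2) by simp
          ultimately show ?thesis by blast
        qed
      qed
    qed
    have s1: "B - Z \<subseteq> D - Z" by (auto simp: D_def)
    show ?thesis by (rule conn_hub[OF s1 connB induced_mono[OF s1] hub])
  qed
  have "no_cut E D"
    unfolding no_cut_def
  proof
    show "conn D (induced E D)" using connDZ[of "{}"] by simp
    show "\<forall>v\<in>D. conn (D - {v}) (induced E (D - {v}))" using connDZ by blast
  qed
  moreover have "B \<subseteq> D" by (simp add: D_def)
  ultimately have "D = B" using B DV by (simp add: is_block_def)
  moreover have "x \<in> D" using x(2) by (simp add: D_def Geo_def)
  ultimately show False using xB by blast
qed



definition proj :: "'a set set \<Rightarrow> 'a set \<Rightarrow> 'a \<Rightarrow> 'a" where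
  "proj E B u = (THE w. w \<in> B \<and> reach (E - induced E B) u w)"

lemma coord_proj: "coord E f B u = f B (proj E B u)"
  by (simp add: coord_def proj_def)

lemma proj_eq:
  assumes sg: "simple_graph V E" and B: "is_block V E B"
    and w: "w \<in> B" and r: "reach (E - induced E B) u w"
  shows "proj E B u = w"
  unfolding proj_def
proof (rule the_equality)
  show "w \<in> B \<and> reach (E - induced E B) u w" using w r by simp
  fix w' assume h: "w' \<in> B \<and> reach (E - induced E B) u w'"
  then have "reach (E - induced E B) w' u" using reach_sym[of _ u w'] by simp
  then have "reach (E - induced E B) w' w" by (rule reach_trans[OF _ r])
  then show "w' = w" using block_unique[OF sg B _ w] h by simp
qed

lemma proj_self:
  assumes sg: "simple_graph V E" and B: "is_block V E B" and w: "w \<in> B"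
  shows "proj E B w = w"
  using proj_eq[OF sg B w reach_refl] .

lemma proj_closest:
  assumes sg: "simple_graph V E" and cV: "conn V E" and B: "is_block V E B"
    and s: "s \<in> V" and x: "x \<in> B" and cl: "\<forall>b\<in>B. gdist E s x \<le> gdist E s b"
  shows "proj E B s = x"
proof -
  have BV: "B \<subseteq> V" using B by (simp add: is_block_def)
  have "reach E s x" using cV s x BV unfolding conn_def by blast
  then have "reach (E - induced E B) s x"
    by (rule closest_reach[OF _ x]) (use cl in blast)
  then show ?thesis by (rule proj_eq[OF sg B x])
qed

lemma proj_in:
  assumes sg: "simple_graph V E" and cV: "conn V E" and B: "is_block V E B" and u: "u \<in> V"
  shows "proj E B u \<in> B \<and> reach (E - induced E B) u (proj E B u)"
proof -
  have BV: "B \<subseteq> V" and Bne: "B \<noteq> {}" using B by (auto simp: is_block_def)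
  then obtain b0 where b0: "b0 \<in> B" by blast
  define m where "m = (LEAST m. \<exists>b\<in>B. gdist E u b = m)"
  have "\<exists>b\<in>B. gdist E u b = m" unfolding m_def by (rule LeastI[of _ "gdist E u b0"]) (use b0 in blast)
  then obtain x where x: "x \<in> B" "gdist E u x = m" by blast
  have cl: "\<forall>b\<in>B. gdist E u x \<le> gdist E u b"
  proof
    fix b assume "b \<in> B"
    then have "m \<le> gdist E u b" unfolding m_def by (intro Least_le) blast
    then show "gdist E u x \<le> gdist E u b" using x by simp
  qed
  have px: "proj E B u = x" by (rule proj_closest[OF sg cV B u x(1) cl])
  have "reach E u x" using cV u x(1) BV unfolding conn_def by blast
  then have "reach (E - induced E B) u x"
    by (rule closest_reach[OF _ x(1)]) (use cl in blast)
  then show ?thesis using px x by simp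
qed

lemma proj_edge_out:
  assumes sg: "simple_graph V E" and cV: "conn V E" and B: "is_block V E B"
    and e: "{x, y} \<in> E" and nB: "\<not> {x, y} \<subseteq> B"
  shows "proj E B x = proj E B y"
proof -
  have xy: "x \<in> V" "y \<in> V" using edge_V[OF e sg] by auto
  have p: "proj E B x \<in> B" "reach (E - induced E B) x (proj E B x)" using proj_in[OF sg cV B xy(1)] by auto
  have "{y, x} \<in> E - induced E B" using e nB by (auto simp: induced_def insert_commute)
  then have "reach (E - induced E B) y x" by (rule reach_edge)
  then have "reach (E - induced E B) y (proj E B x)" by (rule reach_trans[OF _ p(2)])
  then show ?thesis using proj_eq[OF sg B p(1)] by simp
qed

lemma conn_single: "conn {x} F"
  by (simp add: conn_def)

lemma no_cut_minus: "no_cut E B \<Longrightarrow> conn (B - {v}) (induced E (B - {v}))"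
  unfolding no_cut_def by (cases "v \<in> B") auto

lemma no_cut_edge:
  assumes e: "{x, y} \<in> E" shows "no_cut E {x, y}"
  unfolding no_cut_def
proof
  have "{x, y} \<in> induced E {x, y}" using e by (simp add: induced_def)
  then have r: "reach (induced E {x, y}) x y" by (rule reach_edge)
  show "conn {x, y} (induced E {x, y})"
    unfolding conn_def using r reach_sym[OF r] by auto
  show "\<forall>v\<in>{x, y}. conn ({x, y} - {v}) (induced E ({x, y} - {v}))"
  proof
    fix v assume "v \<in> {x, y}"
    then have "({x, y} - {v}) = {} \<or> (\<exists>z. {x, y} - {v} = {z})" by auto
    then show "conn ({x, y} - {v}) (induced E ({x, y} - {v}))"
    proof
      assume "{x, y} - {v} = {}" then show ?thesis by (simp add: conn_def)
    next
      assume "\<exists>z. {x, y} - {v} = {z}"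
      then obtain z where "{x, y} - {v} = {z}" by blast
      then show ?thesis using conn_single[of z "induced E {z}"] by simp
    qed
  qed
qed

lemma edge_block:
  assumes sg: "simple_graph V E" and e: "{x, y} \<in> E"
  shows "\<exists>B. is_block V E B \<and> x \<in> B \<and> y \<in> B"
proof -
  define DD where "DD = {D. {x, y} \<subseteq> D \<and> D \<subseteq> V \<and> no_cut E D}"
  have finV: "finite V" using sg by (simp add: simple_graph_def)
  have "DD \<subseteq> Pow V" by (auto simp: DD_def)
  then have finDD: "finite DD" using finV by (simp add: finite_subset)
  have "{x, y} \<in> DD" using edge_V[OF e sg] no_cut_edge[OF e] by (simp add: DD_def)
  then have neDD: "DD \<noteq> {}" by blast
  define M where "M = Max (card ` DD)"
  have "M \<in> card ` DD" unfolding M_def using finDD neDD by (intro Max_in) auto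
  then obtain D where D: "D \<in> DD" "card D = M" by blast
  have maxD: "card D' \<le> card D" if "D' \<in> DD" for D'
    using that finDD D(2) unfolding M_def by (simp add: Max_ge)
  have "is_block V E D"
    unfolding is_block_def
  proof (intro conjI allI impI)
    show "D \<subseteq> V" "no_cut E D" using D(1) by (auto simp: DD_def)
    show "D \<noteq> {}" using D(1) by (auto simp: DD_def)
    fix B' assume h: "D \<subseteq> B' \<and> B' \<subseteq> V \<and> no_cut E B'"
    then have "B' \<in> DD" using D(1) by (auto simp: DD_def)
    then have "card B' \<le> card D" by (rule maxD)
    moreover have "finite B'" using h finV finite_subset by blast
    ultimately show "B' = D" using h by (metis card_seteq)
  qed
  then show ?thesis using D(1) by (auto simp: DD_def)
qed

lemma block_inter:
  assumes sg: "simple_graph V E" and B1: "is_block V E B1" and B2: "is_block V E B2"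
    and xy: "x \<in> B1" "y \<in> B1" "x \<in> B2" "y \<in> B2" "x \<noteq> y"
  shows "B1 = B2"
proof -
  have n1: "no_cut E B1" and n2: "no_cut E B2" using B1 B2 by (auto simp: is_block_def)
  have "no_cut E (B1 \<union> B2)"
    unfolding no_cut_def
  proof
    show "conn (B1 \<union> B2) (induced E (B1 \<union> B2))"
      by (rule conn_union) (use n1 n2 xy in \<open>auto simp: no_cut_def\<close>)
    show "\<forall>v\<in>B1 \<union> B2. conn (B1 \<union> B2 - {v}) (induced E (B1 \<union> B2 - {v}))"
    proof
      fix v
      have eq: "B1 \<union> B2 - {v} = (B1 - {v}) \<union> (B2 - {v})" by blast
      have "(B1 - {v}) \<inter> (B2 - {v}) \<noteq> {}" using xy by blast
      then show "conn (B1 \<union> B2 - {v}) (induced E (B1 \<union> B2 - {v}))"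
        unfolding eq by (rule conn_union[OF no_cut_minus[OF n1] no_cut_minus[OF n2]])
    qed
  qed
  moreover have "B1 \<union> B2 \<subseteq> V" using B1 B2 by (auto simp: is_block_def)
  moreover have m1: "\<forall>B'. B1 \<subseteq> B' \<and> B' \<subseteq> V \<and> no_cut E B' \<longrightarrow> B' = B1"
    using B1 by (simp add: is_block_def)
  moreover have m2: "\<forall>B'. B2 \<subseteq> B' \<and> B' \<subseteq> V \<and> no_cut E B' \<longrightarrow> B' = B2"
    using B2 by (simp add: is_block_def)
  ultimately have "B1 \<union> B2 = B1" "B1 \<union> B2 = B2"
    by (metis Un_upper1, metis Un_upper2)
  then show ?thesis by simp
qed

definition Rch :: "'a set set \<Rightarrow> 'a set \<Rightarrow> 'a set" where
  "Rch F X = {y. \<exists>x\<in>X. reach F x y}"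

lemma Rch_base: "X \<subseteq> Rch F X"
proof
  fix x assume "x \<in> X"
  moreover have "reach F x x" by simp
  ultimately show "x \<in> Rch F X" unfolding Rch_def by blast
qed

lemma Rch_mono: "X \<subseteq> Y \<Longrightarrow> Rch F X \<subseteq> Rch F Y"
  unfolding Rch_def by blast

lemma Rch_step: "u \<in> Rch F X \<Longrightarrow> {u, v} \<in> F \<Longrightarrow> v \<in> Rch F X"
proof -
  assume "u \<in> Rch F X" "{u, v} \<in> F"
  then obtain x where "x \<in> X" "reach F x u" by (auto simp: Rch_def)
  moreover from this(2) have "reach F x v" using \<open>{u, v} \<in> F\<close> by (rule reach_step)
  ultimately show ?thesis by (auto simp: Rch_def)
qed

lemma Rch_closed:
  assumes "X \<subseteq> Y" "\<forall>u v. {u, v} \<in> F \<longrightarrow> u \<in> Y \<longrightarrow> v \<in> Y"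
  shows "Rch F X \<subseteq> Y"
proof
  fix y assume "y \<in> Rch F X"
  then obtain x where x: "x \<in> X" "reach F x y" by (auto simp: Rch_def)
  from x(2) show "y \<in> Y" unfolding reach_def
  proof (induction rule: rtranclp_induct)
    case base then show ?case using x(1) assms(1) by blast
  next
    case (step y z) then show ?case using assms(2) by blast
  qed
qed

lemma Rch_card:
  assumes "finite F" "\<forall>e\<in>F. \<exists>a b. e = {a, b}" "finite X"
  shows "finite (Rch F X) \<and> card (Rch F X) \<le> card X + card F"
  using assms
proof (induction F arbitrary: X rule: finite_induct)
  case empty
  have "Rch {} X \<subseteq> X" by (rule Rch_closed) auto
  then have "finite (Rch {} X)" "card (Rch {} X) \<le> card X"
    using empty.prems by (auto intro: finite_subset card_mono)
  then show ?case by simp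
next
  case (insert e F)
  obtain a b where e: "e = {a, b}" using insert.prems by blast
  have hF: "\<forall>e\<in>F. \<exists>a b. e = {a, b}" using insert.prems by blast
  show ?case
  proof (cases "\<exists>c d. e = {c, d} \<and> c \<in> Rch F X")
    case True
    then obtain c d where cd: "e = {c, d}" "c \<in> Rch F X" by blast
    define Y where "Y = Rch F (insert d X)"
    have sub: "Rch (insert e F) X \<subseteq> Y"
    proof (rule Rch_closed)
      show "X \<subseteq> Y" unfolding Y_def using Rch_base[of "insert d X" F] by blast
      have cY: "c \<in> Y" using cd(2) Rch_mono[of X "insert d X" F] unfolding Y_def by blast
      have dY: "d \<in> Y" using Rch_base[of "insert d X" F] unfolding Y_def by blast
      show "\<forall>u v. {u, v} \<in> insert e F \<longrightarrow> u \<in> Y \<longrightarrow> v \<in> Y"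
      proof (intro allI impI)
        fix u v assume h: "{u, v} \<in> insert e F" "u \<in> Y"
        show "v \<in> Y"
        proof (cases "{u, v} = e")
          case True then have "v \<in> {c, d}" using cd(1) by blast
          then show ?thesis using cY dY by blast
        next
          case False then have "{u, v} \<in> F" using h(1) by blast
          then show ?thesis unfolding Y_def by (rule Rch_step[OF h(2)[unfolded Y_def]])
        qed
      qed
    qed
    have IH: "finite Y \<and> card Y \<le> card (insert d X) + card F"
      unfolding Y_def using insert.IH[OF hF] insert.prems by simp
    moreover have "card (insert d X) \<le> card X + 1" by (simp add: card_insert_if insert.prems)
    moreover have cF: "card (insert e F) = card F + 1" using insert.hyps by simp
    moreover have fY: "finite Y" using IH by simp
    moreover have "card (Rch (insert e F) X) \<le> card Y" by (rule card_mono[OF fY sub])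
    moreover have "finite (Rch (insert e F) X)" by (rule finite_subset[OF sub fY])
    ultimately show ?thesis by linarith
  next
    case False
    have sub: "Rch (insert e F) X \<subseteq> Rch F X"
    proof (rule Rch_closed)
      show "X \<subseteq> Rch F X" by (rule Rch_base)
      show "\<forall>u v. {u, v} \<in> insert e F \<longrightarrow> u \<in> Rch F X \<longrightarrow> v \<in> Rch F X"
      proof (intro allI impI)
        fix u v assume h: "{u, v} \<in> insert e F" "u \<in> Rch F X"
        have "{u, v} \<noteq> e" using False h(2) by blast
        then have "{u, v} \<in> F" using h(1) by blast
        then show "v \<in> Rch F X" by (rule Rch_step[OF h(2)])
      qed
    qed
    have IH: "finite (Rch F X) \<and> card (Rch F X) \<le> card X + card F"
      using insert.IH[OF hF] insert.prems by simp
    moreover have cF: "card (insert e F) = card F + 1" using insert.hyps by simp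
    moreover have fY: "finite (Rch F X)" using IH by simp
    moreover have "card (Rch (insert e F) X) \<le> card (Rch F X)" by (rule card_mono[OF fY sub])
    moreover have "finite (Rch (insert e F) X)" by (rule finite_subset[OF sub fY])
    ultimately show ?thesis by linarith
  qed
qed



lemma blocks_finite: "simple_graph V E \<Longrightarrow> finite (blocks V E)"
proof -
  assume sg: "simple_graph V E"
  have "blocks V E \<subseteq> Pow V" by (auto simp: blocks_def is_block_def)
  moreover have "finite V" using sg by (simp add: simple_graph_def)
  ultimately show ?thesis by (simp add: finite_subset)
qed

lemma edge_pair: "simple_graph V E \<Longrightarrow> e \<in> E \<Longrightarrow> \<exists>a b. e = {a, b} \<and> a \<noteq> b"
  unfolding simple_graph_def by (metis card_2_iff)

lemma proj_reach_lift:
  assumes sg: "simple_graph V E" and cV: "conn V E" and B: "is_block V E B"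
    and FE: "F \<subseteq> E" and w0: "w0 \<in> V" and r: "reach F w0 w"
  shows "reach (F \<inter> induced E B) (proj E B w0) (proj E B w)"
  using r unfolding reach_def[of F]
proof (induction rule: rtranclp_induct)
  case base then show ?case by simp
next
  case (step y z)
  have e: "{y, z} \<in> E" using step(2) FE by auto
  show ?case
  proof (cases "{y, z} \<subseteq> B")
    case True
    then have "proj E B y = y" "proj E B z = z" using proj_self[OF sg B] by auto
    moreover have "{y, z} \<in> F \<inter> induced E B" using step(2) e True by (simp add: induced_def)
    ultimately show ?thesis using reach_step[OF step(3)] by simp
  next
    case False
    then have "proj E B y = proj E B z" by (rule proj_edge_out[OF sg cV B e])
    then show ?thesis using step(3) by simp
  qed
qed

lemma lower_block:
  assumes sg: "simple_graph V E" and cV: "conn V E" and B: "is_block V E B"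
    and SW: "S \<subseteq> W" and WV: "W \<subseteq> V" and FE: "F \<subseteq> E" and cW: "conn W F" and Sne: "S \<noteq> {}"
  shows "card (proj E B ` S) \<le> card (F \<inter> induced E B) + 1"
proof -
  obtain w0 where w0: "w0 \<in> S" using Sne by blast
  have w0V: "w0 \<in> V" using w0 SW WV by blast
  have sub: "proj E B ` S \<subseteq> Rch (F \<inter> induced E B) {proj E B w0}"
  proof
    fix p assume "p \<in> proj E B ` S"
    then obtain w where w: "w \<in> S" "p = proj E B w" by blast
    have "reach F w0 w" using cW w0 w(1) SW unfolding conn_def by blast
    then have "reach (F \<inter> induced E B) (proj E B w0) (proj E B w)"
      by (rule proj_reach_lift[OF sg cV B FE w0V])
    then show "p \<in> Rch (F \<inter> induced E B) {proj E B w0}" using w(2) by (simp add: Rch_def)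
  qed
  have finF: "finite (F \<inter> induced E B)" using finite_E[OF sg] FE by (meson finite_subset inf_le1 order_trans)
  have pairs: "\<forall>e\<in>F \<inter> induced E B. \<exists>a b. e = {a, b}" using edge_pair[OF sg] FE by blast
  have "finite (Rch (F \<inter> induced E B) {proj E B w0}) \<and>
        card (Rch (F \<inter> induced E B) {proj E B w0}) \<le> card {proj E B w0} + card (F \<inter> induced E B)"
    by (rule Rch_card[OF finF pairs]) simp
  then show ?thesis using card_mono[OF _ sub] by fastforce
qed

lemma lower:
  assumes sg: "simple_graph V E" and cV: "conn V E"
    and SW: "S \<subseteq> W" and WV: "W \<subseteq> V" and FE: "F \<subseteq> E" and cW: "conn W F" and Sne: "S \<noteq> {}"
  shows "(\<Sum>B\<in>blocks V E. card (proj E B ` S) - 1) \<le> card F"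
proof -
  have finB: "finite (blocks V E)" by (rule blocks_finite[OF sg])
  have finF: "finite F" using finite_E[OF sg] FE by (rule finite_subset[rotated])
  have "(\<Sum>B\<in>blocks V E. card (proj E B ` S) - 1) \<le> (\<Sum>B\<in>blocks V E. card (F \<inter> induced E B))"
  proof (rule sum_mono)
    fix B assume "B \<in> blocks V E"
    then have B: "is_block V E B" by (simp add: blocks_def)
    show "card (proj E B ` S) - 1 \<le> card (F \<inter> induced E B)"
      using lower_block[OF sg cV B SW WV FE cW Sne] by linarith
  qed
  also have "\<dots> = card (\<Union>B\<in>blocks V E. F \<inter> induced E B)"
  proof (rule card_UN_disjoint[symmetric])
    show "finite (blocks V E)" by (rule finB)
    show "\<forall>B\<in>blocks V E. finite (F \<inter> induced E B)" using finF by simp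
    show "\<forall>B1\<in>blocks V E. \<forall>B2\<in>blocks V E. B1 \<noteq> B2 \<longrightarrow> (F \<inter> induced E B1) \<inter> (F \<inter> induced E B2) = {}"
    proof (intro ballI impI)
      fix B1 B2 assume h: "B1 \<in> blocks V E" "B2 \<in> blocks V E" "B1 \<noteq> B2"
      show "(F \<inter> induced E B1) \<inter> (F \<inter> induced E B2) = {}"
      proof (rule ccontr)
        assume "(F \<inter> induced E B1) \<inter> (F \<inter> induced E B2) \<noteq> {}"
        then obtain e where e: "e \<in> E" "e \<subseteq> B1" "e \<subseteq> B2" by (auto simp: induced_def)
        obtain a b where ab: "e = {a, b}" "a \<noteq> b" using edge_pair[OF sg e(1)] by blast
        have "B1 = B2"
          by (rule block_inter[OF sg, of B1 B2 a b]) (use h e ab in \<open>auto simp: blocks_def\<close>)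
        then show False using h(3) by simp
      qed
    qed
  qed
  also have "\<dots> \<le> card F" by (rule card_mono[OF finF]) blast
  finally show ?thesis .
qed



definition cen :: "'a set set \<Rightarrow> 'a set \<Rightarrow> 'a set \<Rightarrow> 'a" where
  "cen E S B = (SOME x. x \<in> proj E B ` S)"

definition star :: "'a set set \<Rightarrow> 'a set \<Rightarrow> 'a set \<Rightarrow> 'a set set" where
  "star E S B = (\<lambda>p. {cen E S B, p}) ` (proj E B ` S - {cen E S B})"

lemma cen_in: "S \<noteq> {} \<Longrightarrow> cen E S B \<in> proj E B ` S"
  unfolding cen_def by (rule someI_ex) blast

lemma star_card: "finite S \<Longrightarrow> S \<noteq> {} \<Longrightarrow> card (star E S B) \<le> card (proj E B ` S) - 1"
proof -
  assume fS: "finite S" and ne: "S \<noteq> {}"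
  have "card (star E S B) \<le> card (proj E B ` S - {cen E S B})"
    unfolding star_def by (rule card_image_le) (simp add: fS)
  also have "\<dots> = card (proj E B ` S) - 1" using cen_in[OF ne] fS by simp
  finally show ?thesis .
qed

lemma star_E:
  assumes sg: "simple_graph V E" and cV: "conn V E" and bg: "block_graph V E"
    and B: "is_block V E B" and SV: "S \<subseteq> V" and ne: "S \<noteq> {}"
  shows "star E S B \<subseteq> E"
proof
  fix e assume "e \<in> star E S B"
  then obtain p where p: "p \<in> proj E B ` S" "p \<noteq> cen E S B" "e = {cen E S B, p}" by (auto simp: star_def)
  have PB: "proj E B ` S \<subseteq> B" using proj_in[OF sg cV B] SV by auto
  have cl: "is_clique E B" using bg B by (simp add: block_graph_def blocks_def)
  have c: "cen E S B \<in> B" using cen_in[OF ne] PB by blast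
  have pB: "p \<in> B" using p(1) PB by blast
  have "cen E S B \<noteq> p" using p(2) by simp
  then show "e \<in> E" using cl c pB p(3) unfolding is_clique_def by simp
qed

lemma star_reach:
  assumes "star E S B \<subseteq> F" "p \<in> proj E B ` S"
  shows "reach F (cen E S B) p"
proof (cases "p = cen E S B")
  case True then show ?thesis by simp
next
  case False
  then have "{cen E S B, p} \<in> star E S B" using assms(2) by (auto simp: star_def)
  then show ?thesis using assms(1) by (intro reach_edge) blast
qed

lemma key_conn:
  assumes sg: "simple_graph V E" and cV: "conn V E" and bg: "block_graph V E"
    and SV: "S \<subseteq> V" and ne: "S \<noteq> {}"
    and FE: "\<And>B. is_block V E B \<Longrightarrow> star E S B \<subseteq> F"
    and s: "s \<in> S" and s': "s' \<in> S"
  shows "reach F s s'"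
proof -
  have sV: "s \<in> V" "s' \<in> V" using s s' SV by auto
  have rV: "reach E a b" if "a \<in> V" "b \<in> V" for a b using cV that unfolding conn_def by blast
  have ss: "reach E s s'" using rV[OF sV] .
  have "\<forall>y. geo E s s' y \<and> gdist E s y = k \<longrightarrow> reach F s y" for k
  proof (induction k)
    case 0
    show ?case
    proof (intro allI impI)
      fix y assume "geo E s s' y \<and> gdist E s y = 0"
      then have "s = y" using gdist_0[of E s y] by (auto simp: geo_def)
      then show "reach F s y" by simp
    qed
  next
    case (Suc k)
    show ?case
    proof (intro allI impI)
      fix y assume y: "geo E s s' y \<and> gdist E s y = Suc k"
      obtain x where x: "{x, y} \<in> E" "geo E s s' x" "gdist E s x = k"
        using geo_pred[OF ss, of y k] y by blast
      have IH: "reach F s x" using Suc x(2,3) by blast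
      obtain B where B: "is_block V E B" "x \<in> B" "y \<in> B" using edge_block[OF sg x(1)] by blast
      have xy: "x \<noteq> y" by (rule edge_ne[OF x(1) sg])
      have BV: "B \<subseteq> V" using B(1) by (simp add: is_block_def)
      have cl: "is_clique E B" using bg B(1) by (simp add: block_graph_def blocks_def)
      have adjB: "{u, v} \<in> E" if "u \<in> B" "v \<in> B" "u \<noteq> v" for u v
        using cl that unfolding is_clique_def by blast
      have px: "proj E B s = x"
      proof (rule proj_closest[OF sg cV B(1) sV(1) B(2)], rule ballI, rule ccontr)
        fix b assume b: "b \<in> B" "\<not> gdist E s x \<le> gdist E s b"
        have "b \<noteq> y" using b(2) y x(3) by auto
        then have eb: "{b, y} \<in> E" using adjB b(1) B(3) by blast
        have rb: "reach E s b" using rV sV(1) b(1) BV by blast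
        have "gdist E s y \<le> gdist E s b + 1" by (rule gdist_adj[OF rb eb])
        then show False using b(2) x(3) y by simp
      qed
      have d1: "gdist E s x + gdist E x s' = gdist E s s'" using x(2) by (simp add: geo_def)
      have d2: "gdist E s y + gdist E y s' = gdist E s s'" using y by (simp add: geo_def)
      have d3: "gdist E s' x = gdist E s' y + 1"
        using d1 d2 x(3) y gdist_sym[of E s' x] gdist_sym[of E s' y] by simp
      have py: "proj E B s' = y"
      proof (rule proj_closest[OF sg cV B(1) sV(2) B(3)], rule ballI, rule ccontr)
        fix b assume b: "b \<in> B" "\<not> gdist E s' y \<le> gdist E s' b"
        have "b \<noteq> x" using b(2) d3 by auto
        then have eb: "{b, x} \<in> E" using adjB b(1) B(2) by blast
        have rb: "reach E s' b" using rV sV(2) b(1) BV by blast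
        have "gdist E s' x \<le> gdist E s' b + 1" by (rule gdist_adj[OF rb eb])
        then show False using b(2) d3 by simp
      qed
      have xP: "x \<in> proj E B ` S" using px s by blast
      have yP: "y \<in> proj E B ` S" using py s' by blast
      have r1: "reach F (cen E S B) x" by (rule star_reach[OF FE[OF B(1)] xP])
      have r2: "reach F (cen E S B) y" by (rule star_reach[OF FE[OF B(1)] yP])
      have "reach F x y" by (rule reach_trans[OF reach_sym[OF r1] r2])
      then show "reach F s y" by (rule reach_trans[OF IH])
    qed
  qed
  then have "geo E s s' s' \<and> gdist E s s' = gdist E s s' \<longrightarrow> reach F s s'" by blast
  then show ?thesis using geo_end[OF ss] by simp
qed



lemma upper:
  assumes sg: "simple_graph V E" and cV: "conn V E" and bg: "block_graph V E"
    and SV: "S \<subseteq> V" and ne: "S \<noteq> {}"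
  shows "\<exists>W F. S \<subseteq> W \<and> W \<subseteq> V \<and> F \<subseteq> E \<and> (\<forall>e\<in>F. e \<subseteq> W) \<and> conn W F \<and>
           card F \<le> (\<Sum>B\<in>blocks V E. card (proj E B ` S) - 1)"
proof -
  have finV: "finite V" using sg by (simp add: simple_graph_def)
  have finS: "finite S" using finite_subset[OF SV finV] .
  have finB: "finite (blocks V E)" by (rule blocks_finite[OF sg])
  define F where "F = (\<Union>B\<in>blocks V E. star E S B)"
  have FB: "star E S B \<subseteq> F" if "is_block V E B" for B
    using that unfolding F_def blocks_def by blast
  have FE: "F \<subseteq> E" unfolding F_def blocks_def using star_E[OF sg cV bg _ SV ne] by blast
  have finF: "finite F" using finite_E[OF sg] FE by (rule finite_subset[rotated])
  have cardF: "card F \<le> (\<Sum>B\<in>blocks V E. card (proj E B ` S) - 1)"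
  proof -
    have "card F \<le> (\<Sum>B\<in>blocks V E. card (star E S B))" unfolding F_def by (rule card_UN_le[OF finB])
    also have "\<dots> \<le> (\<Sum>B\<in>blocks V E. card (proj E B ` S) - 1)"
      by (rule sum_mono) (rule star_card[OF finS ne])
    finally show ?thesis .
  qed
  have key: "reach F s s'" if "s \<in> S" "s' \<in> S" for s s'
    by (rule key_conn[OF sg cV bg SV ne FB that])
  define W where "W = Rch F S"
  define F' where "F' = {e \<in> F. e \<subseteq> W}"
  have SW: "S \<subseteq> W" unfolding W_def by (rule Rch_base)
  have WV: "W \<subseteq> V"
  proof
    fix y assume "y \<in> W"
    then obtain s where s: "s \<in> S" "reach F s y" by (auto simp: W_def Rch_def)
    show "y \<in> V" by (rule reach_V[OF s(2) FE _ sg]) (use s SV in blast)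
  qed
  have lift: "reach F' s y" if s: "s \<in> S" and r: "reach F s y" for s y
    using r unfolding reach_def[of F]
  proof (induction rule: rtranclp_induct)
    case base then show ?case by simp
  next
    case (step y z)
    have yW: "y \<in> W" using s step(1) unfolding W_def Rch_def reach_def by blast
    have zW: "z \<in> W" using Rch_step[OF yW[unfolded W_def] step(2)] by (simp add: W_def)
    have "{y, z} \<in> F'" using step(2) yW zW by (simp add: F'_def)
    then show ?case by (rule reach_step[OF step(3)])
  qed
  have cW: "conn W F'"
    unfolding conn_def
  proof (intro ballI)
    fix a b assume a: "a \<in> W" and b: "b \<in> W"
    obtain s1 where s1: "s1 \<in> S" "reach F s1 a" using a by (auto simp: W_def Rch_def)
    obtain s2 where s2: "s2 \<in> S" "reach F s2 b" using b by (auto simp: W_def Rch_def)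
    have r1: "reach F' s1 a" by (rule lift[OF s1])
    have r2: "reach F' s2 b" by (rule lift[OF s2])
    have r12: "reach F' s1 s2" by (rule lift[OF s1(1) key[OF s1(1) s2(1)]])
    show "reach F' a b" by (rule reach_trans[OF reach_sym[OF r1] reach_trans[OF r12 r2]])
  qed
  have "card F' \<le> card F" by (rule card_mono[OF finF]) (auto simp: F'_def)
  then have "card F' \<le> (\<Sum>B\<in>blocks V E. card (proj E B ` S) - 1)" using cardF by linarith
  moreover have "F' \<subseteq> E" "\<forall>e\<in>F'. e \<subseteq> W" using FE by (auto simp: F'_def)
  ultimately show ?thesis using SW WV cW by blast
qed

theorem theorem2:
  fixes V :: "'a set" and E :: "'a set set" and f :: "'a set \<Rightarrow> 'a \<Rightarrow> nat" and S :: "'a set"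
  assumes "simple_graph V E"
    and "conn V E"
    and "block_graph V E"
    and "hamming_maps V E f"
    and "S \<subseteq> V"
    and "2 \<le> card S" and "card S \<le> card V"
  shows "int (steiner_dist V E S) =
           (\<Sum>B\<in>blocks V E. int (ell E f B S)) - int (card (blocks V E))"
proof -
  note sg = assms(1) and cV = assms(2) and bg = assms(3) and hm = assms(4) and SV = assms(5)
  have ne: "S \<noteq> {}" using assms(6) by auto
  have finV: "finite V" using sg by (simp add: simple_graph_def)
  have finS: "finite S" using finite_subset[OF SV finV] .
  define N where "N = (\<Sum>B\<in>blocks V E. card (proj E B ` S) - 1)"
  define Q where "Q = (\<lambda>m. \<exists>W F. S \<subseteq> W \<and> W \<subseteq> V \<and> F \<subseteq> E \<and>
       (\<forall>e\<in>F. e \<subseteq> W) \<and> conn W F \<and> card F = m)"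
  have sd: "steiner_dist V E S = (LEAST m. Q m)" unfolding steiner_dist_def Q_def by simp
  obtain W F where WF: "S \<subseteq> W" "W \<subseteq> V" "F \<subseteq> E" "\<forall>e\<in>F. e \<subseteq> W" "conn W F" "card F \<le> N"
    using upper[OF sg cV bg SV ne] unfolding N_def by blast
  have QF: "Q (card F)" unfolding Q_def using WF by blast
  have le1: "steiner_dist V E S \<le> N"
    using Least_le[of Q "card F", OF QF] WF(6) sd by simp
  have "Q (steiner_dist V E S)" unfolding sd by (rule LeastI[of Q, OF QF])
  then obtain W0 F0 where W0: "S \<subseteq> W0" "W0 \<subseteq> V" "F0 \<subseteq> E" "conn W0 F0" "card F0 = steiner_dist V E S"
    unfolding Q_def by blast
  have "N \<le> card F0" unfolding N_def by (rule lower[OF sg cV W0(1-4) ne])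
  then have sdN: "steiner_dist V E S = N" using le1 W0(5) by simp
  have ellB: "ell E f B S = card (proj E B ` S)" if B: "B \<in> blocks V E" for B
  proof -
    have Bb: "is_block V E B" using B by (simp add: blocks_def)
    have PB: "proj E B ` S \<subseteq> B" using proj_in[OF sg cV Bb] SV by auto
    have inj: "inj_on (f B) B" using hm B by (simp add: hamming_maps_def)
    have "coord E f B ` S = f B ` (proj E B ` S)" by (auto simp: coord_proj)
    then show ?thesis unfolding ell_def using card_image[OF inj_on_subset[OF inj PB]] by simp
  qed
  have pos: "1 \<le> card (proj E B ` S)" for B
    using ne finS by (simp add: Suc_le_eq card_gt_0_iff)
  have "int N = (\<Sum>B\<in>blocks V E. int (card (proj E B ` S)) - 1)"
    unfolding N_def of_nat_sum using pos by (simp add: of_nat_diff)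
  also have "\<dots> = (\<Sum>B\<in>blocks V E. int (card (proj E B ` S))) - int (card (blocks V E))"
    by (simp add: sum_subtractf)
  also have "\<dots> = (\<Sum>B\<in>blocks V E. int (ell E f B S)) - int (card (blocks V E))"
    using ellB by simp
  finally show ?thesis using sdN by simp
qed

end
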